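(* Let $n,d,c\in\mathbb{N}$ with $d\ge 50$ and $c\in[d]$, let $\mathcal{F}\subseteq 2^{[n]}$ be a hereditary family with $\delta(\mathcal{F})\ge 2^{d-1}-c+1$, let $P$ be an isolated pile of $\mathcal{F}$, and put $\delta=2^{d-1}-c+1$. Then for every $x\in P$, $\omega_{out}(x)\ge \frac{\delta-d_{\mathcal{G}}(x)}{3+\log_2 c}$.
   Context: A family is hereditary if it is closed under taking subsets. $d_{\mathcal{F}}(x)=|\{F\in\mathcal{F}:x\in F\}|$, $\delta(\mathcal{F})=\min_x d_{\mathcal{F}}(x)$, $N(x)=\bigcup_{x\in F\in\mathcal{F}}F$. A set $P\subseteq[n]$ with $|P|=d$ is a pile of $\mathcal{F}$ if $P\subseteq N(y)$ for every $y\in P$, and there exists $z\in P$ with $N(z)=P$; a pile is isolated if it is disjoint from every other pile. Given the pile $P$, let $\mathcal{G}=\{S\subseteq P: S\in\mathcal{F}\}$ and $d_{\mathcal{G}}(x)=|\{S\in\mathcal{G}:x\in S\}|$. For $x\in P$, the external weight is $\omega_{out}(x)=\sum_{x\in S\in\mathcal{F}\setminus\mathcal{G}}\frac{1}{|S|}$. *)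

theory Defs
  imports Complex_Main
begin

definition hereditary :: "nat set set \<Rightarrow> bool" where
  "hereditary \<F> \<longleftrightarrow> (\<forall>F\<in>\<F>. \<forall>S. S \<subseteq> F \<longrightarrow> S \<in> \<F>)"

definition deg :: "nat set set \<Rightarrow> nat \<Rightarrow> nat" where
  "deg \<F> x = card {F\<in>\<F>. x \<in> F}"

definition min_deg :: "nat \<Rightarrow> nat set set \<Rightarrow> nat" where
  "min_deg n \<F> = Min ((deg \<F>) ` {1..n})"

definition nbhd :: "nat set set \<Rightarrow> nat \<Rightarrow> nat set" where
  "nbhd \<F> x = \<Union>{F\<in>\<F>. x \<in> F}"

definition is_pile :: "nat \<Rightarrow> nat \<Rightarrow> nat set set \<Rightarrow> nat set \<Rightarrow> bool" where
  "is_pile n d \<F> P \<longleftrightarrow> P \<subseteq> {1..n} \<and> card P = d \<and>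
     (\<forall>y\<in>P. P \<subseteq> nbhd \<F> y) \<and> (\<exists>z\<in>P. nbhd \<F> z = P)"

definition isolated_pile :: "nat \<Rightarrow> nat \<Rightarrow> nat set set \<Rightarrow> nat set \<Rightarrow> bool" where
  "isolated_pile n d \<F> P \<longleftrightarrow> is_pile n d \<F> P \<and>
     (\<forall>Q. is_pile n d \<F> Q \<and> Q \<noteq> P \<longrightarrow> P \<inter> Q = {})"

definition pile_family :: "nat set set \<Rightarrow> nat set \<Rightarrow> nat set set" where
  "pile_family \<F> P = {S\<in>\<F>. S \<subseteq> P}"

definition omega_out :: "nat set set \<Rightarrow> nat set \<Rightarrow> nat \<Rightarrow> real" where
  "omega_out \<F> P x = (\<Sum>S\<in>{S\<in>\<F> - pile_family \<F> P. x \<in> S}. 1 / real (card S))"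

end

theory Submission
  imports Defs
begin

lemma card_star:
  assumes "finite P" "x \<in> P"
  shows "card {S. S \<subseteq> P \<and> x \<in> S} = 2^(card P - 1)"
proof -
  have eq: "{S. S \<subseteq> P \<and> x \<in> S} = insert x ` Pow (P - {x})"
  proof
    show "{S. S \<subseteq> P \<and> x \<in> S} \<subseteq> insert x ` Pow (P - {x})"
    proof
      fix S assume "S \<in> {S. S \<subseteq> P \<and> x \<in> S}"
      then have "S = insert x (S - {x})" "S - {x} \<in> Pow (P - {x})" by auto
      then show "S \<in> insert x ` Pow (P - {x})" by blast
    qed
  qed (use assms in auto)
  have inj: "inj_on (insert x) (Pow (P - {x}))"
    unfolding inj_on_def by (metis Diff_insert_absorb PowD subset_Diff_insert)
  have "card {S. S \<subseteq> P \<and> x \<in> S} = card (Pow (P - {x}))"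
    using eq card_image[OF inj] by simp
  also have "\<dots> = 2^(card P - 1)"
    using assms by (simp add: card_Pow)
  finally show ?thesis .
qed

lemma harmonic_bound:
  fixes T :: "nat set set" and x :: nat and P :: "nat set" and t :: nat and D :: real
  assumes fin: "finite T"
    and mem: "\<forall>S\<in>T. finite S \<and> x \<in> S \<and> \<not> S \<subseteq> P"
    and clo: "\<forall>S\<in>T. \<forall>S'. S' \<subseteq> S \<and> x \<in> S' \<and> \<not> S' \<subseteq> P \<longrightarrow> S' \<in> T"
    and xP: "x \<in> P"
    and D1: "D \<le> real (card T)" and D2: "D \<le> 2^t"
  shows "D / (real t + 2) \<le> (\<Sum>S\<in>T. 1 / real (card S))"
proof (cases "\<forall>S\<in>T. card S \<le> t + 2")
  case True
  have "(\<Sum>S\<in>T. 1 / (real t + 2)) \<le> (\<Sum>S\<in>T. 1 / real (card S))"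
  proof (rule sum_mono)
    fix S assume S: "S \<in> T"
    then have "card S > 0" using mem card_gt_0_iff by blast
    moreover have "card S \<le> t + 2" using True S by blast
    ultimately show "1 / (real t + 2) \<le> 1 / real (card S)"
      by (simp add: frac_le)
  qed
  moreover have "D / (real t + 2) \<le> (\<Sum>S\<in>T. 1 / (real t + 2))"
    using D1 by (simp add: divide_right_mono)
  ultimately show ?thesis by linarith
next
  case False
  then obtain S0 where S0: "S0 \<in> T" "card S0 > t + 2" by auto
  then obtain y where y: "y \<in> S0" "y \<notin> P" using mem by blast
  have xS0: "x \<in> S0" and fS0: "finite S0" using mem S0 by auto
  have xy: "x \<noteq> y" using xP y by auto
  have "card (S0 - {x, y}) = card S0 - 2"
    using xS0 y xy fS0 by (simp add: card_Diff_subset)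
  then have "t \<le> card (S0 - {x, y})" using S0 by simp
  then obtain W where W: "W \<subseteq> S0 - {x, y}" "card W = t"
    by (meson obtain_subset_with_card_n)
  have fW: "finite W" using W fS0 finite_subset by blast
  define f where "f = (\<lambda>A. insert x (insert y A))"
  have inj: "inj_on f (Pow W)"
  proof (rule inj_onI)
    fix A B assume "A \<in> Pow W" "B \<in> Pow W" "f A = f B"
    then show "A = B" using W unfolding f_def by (auto simp: set_eq_iff)
  qed
  have sub: "f ` Pow W \<subseteq> T"
  proof
    fix S assume "S \<in> f ` Pow W"
    then obtain A where A: "A \<subseteq> W" "S = f A" by auto
    have "S \<subseteq> S0" using A W xS0 y unfolding f_def by auto
    moreover have "x \<in> S" "\<not> S \<subseteq> P" using A y unfolding f_def by auto
    ultimately show "S \<in> T" using clo S0 by blast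
  qed
  have cardF: "card (f ` Pow W) = 2^t"
    using card_image[OF inj] fW W by (simp add: card_Pow)
  have "(\<Sum>S\<in>f ` Pow W. 1 / (real t + 2)) \<le> (\<Sum>S\<in>f ` Pow W. 1 / real (card S))"
  proof (rule sum_mono)
    fix S assume "S \<in> f ` Pow W"
    then obtain A where A: "A \<subseteq> W" "S = f A" by auto
    have fA: "finite A" using A fW finite_subset by blast
    have "x \<notin> A" "y \<notin> A" using A W by auto
    then have "card S = card A + 2" using A fA xy unfolding f_def by simp
    moreover have "card A \<le> t" using A fW W card_mono by blast
    ultimately show "1 / (real t + 2) \<le> 1 / real (card S)"
      by (simp add: frac_le)
  qed
  also have "\<dots> \<le> (\<Sum>S\<in>T. 1 / real (card S))"
    by (rule sum_mono2[OF fin sub]) auto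
  finally have "2^t / (real t + 2) \<le> (\<Sum>S\<in>T. 1 / real (card S))"
    using cardF by simp
  moreover have "D / (real t + 2) \<le> 2^t / (real t + 2)"
    using D2 by (simp add: divide_right_mono)
  ultimately show ?thesis by linarith
qed

theorem mainTheorem17:
  fixes n d c :: nat and \<F> :: "nat set set" and P :: "nat set"
  assumes "d \<ge> 50" and "c \<in> {1..d}"
    and "\<F> \<subseteq> Pow {1..n}" and "hereditary \<F>"
    and "min_deg n \<F> \<ge> 2^(d-1) - c + 1"
    and "isolated_pile n d \<F> P"
  shows "\<forall>x\<in>P. omega_out \<F> P x \<ge>
           (real (2^(d-1) - c + 1) - real (deg (pile_family \<F> P) x)) / (3 + log 2 (real c))"
proof
  fix x assume xP: "x \<in> P"
  note A = assms
  have pile: "is_pile n d \<F> P" using A(6) unfolding isolated_pile_def by blast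
  have Pn: "P \<subseteq> {1..n}" and cP: "card P = d" using pile unfolding is_pile_def by auto
  obtain z where zP: "z \<in> P" and Nz: "nbhd \<F> z = P" using pile unfolding is_pile_def by blast
  have finP: "finite P" using Pn finite_subset by blast
  have finF: "finite \<F>" using A(3) finite_subset by (metis finite_Pow_iff finite_atLeastAtMost)
  have her: "\<And>F S. F \<in> \<F> \<Longrightarrow> S \<subseteq> F \<Longrightarrow> S \<in> \<F>" using A(4) unfolding hereditary_def by blast
  define \<delta> where "\<delta> = (2::nat)^(d-1) - c + 1"
  have c1: "1 \<le> c" "c \<le> d" using A(2) by auto
  have "d - 1 < 2^(d-1)" by (rule less_exp)
  then have cle: "c \<le> 2^(d-1)" using c1 A(1) by linarith
  have rdelta: "real \<delta> = 2^(d-1) - real c + 1" unfolding \<delta>_def using cle by (simp add: of_nat_diff)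
  have mindeg: "\<And>y. y \<in> {1..n} \<Longrightarrow> \<delta> \<le> deg \<F> y"
  proof -
    fix y assume "y \<in> {1..n}"
    then have "min_deg n \<F> \<le> deg \<F> y" unfolding min_deg_def by (intro Min_le) auto
    then show "\<delta> \<le> deg \<F> y" using A(5) unfolding \<delta>_def by linarith
  qed
  define G where "G = pile_family \<F> P"
  have Gdef: "G = {S\<in>\<F>. S \<subseteq> P}" unfolding G_def pile_family_def by simp
  define T where "T = {S\<in>\<F> - G. x \<in> S}"
  define dG where "dG = deg G x"
  have finT: "finite T" unfolding T_def using finF by simp
  have degx: "deg \<F> x = dG + card T"
  proof -
    have "{F\<in>\<F>. x \<in> F} = {S\<in>G. x \<in> S} \<union> T" unfolding T_def Gdef by auto
    moreover have "{S\<in>G. x \<in> S} \<inter> T = {}" unfolding T_def by auto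
    moreover have "finite {S\<in>G. x \<in> S}" unfolding Gdef using finF by simp
    ultimately show ?thesis unfolding deg_def dG_def using finT by (simp add: card_Un_disjoint)
  qed
  have D1: "real \<delta> - real dG \<le> real (card T)"
    using degx mindeg[of x] xP Pn by fastforce
  define M where "M = (\<lambda>u. {S. S \<subseteq> P \<and> u \<in> S \<and> S \<notin> \<F>})"
  have split: "\<And>u. u \<in> P \<Longrightarrow> 2^(d-1) = deg G u + card (M u)"
  proof -
    fix u assume uP: "u \<in> P"
    have "{S. S \<subseteq> P \<and> u \<in> S} = {S\<in>G. u \<in> S} \<union> M u" unfolding M_def Gdef by auto
    moreover have "{S\<in>G. u \<in> S} \<inter> M u = {}" unfolding M_def Gdef by auto
    moreover have "finite {S. S \<subseteq> P \<and> u \<in> S}" using finP by simp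
    ultimately have "card {S. S \<subseteq> P \<and> u \<in> S} = deg G u + card (M u)"
      unfolding deg_def by (metis (no_types, lifting) card_Un_disjoint finite_Un)
    then show "2^(d-1) = deg G u + card (M u)" using card_star[OF finP uP] cP by simp
  qed
  have degz: "deg G z = deg \<F> z"
  proof -
    have "{S\<in>G. z \<in> S} = {F\<in>\<F>. z \<in> F}" unfolding Gdef using Nz unfolding nbhd_def by auto
    then show ?thesis unfolding deg_def by simp
  qed
  have Mz: "card (M z) + 1 \<le> c"
    using split[OF zP] degz mindeg[of z] zP Pn unfolding \<delta>_def by fastforce
  have finMz: "finite (M z)" unfolding M_def using finP by simp
  have Mx: "card (M x) \<le> 2 * card (M z)"
  proof -
    have "M x \<subseteq> (\<Union>B\<in>M z. {B, B - {z}})"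
    proof
      fix S assume S: "S \<in> M x"
      have "insert z S \<in> M z" using S zP her unfolding M_def by blast
      then show "S \<in> (\<Union>B\<in>M z. {B, B - {z}})"
        by (cases "z \<in> S") (auto simp: insert_absorb)
    qed
    then have "card (M x) \<le> card (\<Union>B\<in>M z. {B, B - {z}})"
      using finMz by (intro card_mono) auto
    also have "\<dots> \<le> (\<Sum>B\<in>M z. card {B, B - {z}})" by (rule card_UN_le[OF finMz])
    also have "\<dots> \<le> (\<Sum>B\<in>M z. 2)" by (intro sum_mono) (simp add: card_insert_le_m1)
    finally show ?thesis by simp
  qed
  have D2: "real \<delta> - real dG \<le> real c - 1"
  proof -
    have n1: "\<delta> + c = 2^(d-1) + 1" unfolding \<delta>_def using cle by simp
    have n2: "(2::nat)^(d-1) = dG + card (M x)" using split[OF xP] unfolding dG_def .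
    have n3: "\<delta> + 1 \<le> dG + c" using n1 n2 Mx Mz by linarith
    then have "real \<delta> + 1 \<le> real dG + real c" by (metis of_nat_add of_nat_le_iff of_nat_1)
    then show ?thesis by linarith
  qed
  define t where "t = nat \<lceil>log 2 (real c)\<rceil>"
  have logc: "log 2 (real c) \<ge> 0" using c1 by simp
  have t1: "real t < log 2 (real c) + 1" unfolding t_def using logc by linarith
  have t2: "real c \<le> 2^t"
  proof -
    have "real c = 2 powr (log 2 (real c))" using c1 by simp
    also have "\<dots> \<le> 2 powr (real t)" unfolding t_def using logc by (intro powr_mono) auto
    also have "\<dots> = 2^t" by (simp add: powr_realpow)
    finally show ?thesis .
  qed
  have memT: "\<forall>S\<in>T. finite S \<and> x \<in> S \<and> \<not> S \<subseteq> P"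
  proof
    fix S assume S: "S \<in> T"
    then have "S \<subseteq> {1..n}" using A(3) unfolding T_def by blast
    then have "finite S" using finite_subset by blast
    then show "finite S \<and> x \<in> S \<and> \<not> S \<subseteq> P" using S unfolding T_def Gdef by blast
  qed
  have cloT: "\<forall>S\<in>T. \<forall>S'. S' \<subseteq> S \<and> x \<in> S' \<and> \<not> S' \<subseteq> P \<longrightarrow> S' \<in> T"
    unfolding T_def Gdef using her by blast
  have HB: "(real \<delta> - real dG) / (real t + 2) \<le> (\<Sum>S\<in>T. 1 / real (card S))"
    by (rule harmonic_bound[OF finT memT cloT xP D1]) (use D2 t2 in linarith)
  have om: "omega_out \<F> P x = (\<Sum>S\<in>T. 1 / real (card S))"
    unfolding omega_out_def T_def G_def by simp
  show "omega_out \<F> P x \<ge>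
           (real (2^(d-1) - c + 1) - real (deg (pile_family \<F> P) x)) / (3 + log 2 (real c))"
  proof (cases "real \<delta> - real dG \<le> 0")
    case True
    have "0 \<le> (\<Sum>S\<in>T. 1 / real (card S))" by (intro sum_nonneg) simp
    moreover have "(real \<delta> - real dG) / (3 + log 2 (real c)) \<le> 0"
      using True logc by (simp add: divide_nonpos_pos)
    ultimately show ?thesis using om unfolding \<delta>_def dG_def G_def by linarith
  next
    case False
    have "(real \<delta> - real dG) / (3 + log 2 (real c)) \<le> (real \<delta> - real dG) / (real t + 2)"
      using False t1 by (intro divide_left_mono) auto
    then show ?thesis using HB om unfolding \<delta>_def dG_def G_def by linarith
  qed
qed

end
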